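(* Let $\theta:R\to S$ be a ring homomorphism, and let $\mathfrak p\subset R$, $\mathfrak q\subset S$ be prime ideals with $\mathfrak p\subseteq\theta^{-1}(\mathfrak q)$. Suppose there exists an $R$-linear map $T:S\to R$ with $T(1)=1$ and $T(\mathfrak q)\subseteq\mathfrak p$. If $S$ is purely $F$-regular along $\mathfrak q$, then $R$ is purely $F$-regular along $\mathfrak p$.
   Context: All rings are noetherian $F$-finite commutative $\mathbb F_p$-algebras. $F^e_*R$ is $R$ viewed as an $R$-module via $r\mapsto r^{p^e}$; $\mathcal C_{e,R}=\operatorname{Hom}_R(F^e_*R,R)$. For an ideal $\mathfrak a$, $\phi\in\mathcal C_{e,R}$ is $\mathfrak a$-compatible if $\phi(F^e_*\mathfrak a)\subseteq\mathfrak a$. For a prime $\mathfrak p\subset R$, $R$ is purely $F$-regular along $\mathfrak p$ if (i) there exist $e>0$ and a $\mathfrak p$-compatible $\phi\in\mathcal C_{e,R}$ with $\phi(F^e_*R)\not\subseteq\mathfrak p$, and (ii) every proper ideal $\mathfrak b\subsetneq R$ that is $\phi$-compatible for every $e>0$ and every $\mathfrak p$-compatible $\phi\in\mathcal C_{e,R}$ satisfies $\mathfrak b\subseteq\mathfrak p$. (Equivalently: for every $r\notin\mathfrak p$ there are $e>0$ and a $\mathfrak p$-compatible $\phi\in\mathcal C_{e,R}$ with $\phi(F^e_*r)=1$.) *)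

theory Defs
  imports Main "HOL-Computational_Algebra.Primes"
begin

definition is_ideal :: "'a::comm_ring_1 set \<Rightarrow> bool" where
  "is_ideal I \<longleftrightarrow> 0 \<in> I \<and> (\<forall>x\<in>I. \<forall>y\<in>I. x + y \<in> I) \<and> (\<forall>r x. x \<in> I \<longrightarrow> r * x \<in> I)"

definition is_prime_ideal :: "'a::comm_ring_1 set \<Rightarrow> bool" where
  "is_prime_ideal P \<longleftrightarrow> is_ideal P \<and> P \<noteq> UNIV \<and> (\<forall>a b. a * b \<in> P \<longrightarrow> a \<in> P \<or> b \<in> P)"

definition noetherian_ring :: "'a::comm_ring_1 itself \<Rightarrow> bool" where
  "noetherian_ring _ \<longleftrightarrow> (\<forall>I::'a set. is_ideal I \<longrightarrow>
     (\<exists>G. finite G \<and> I = {y. \<exists>c. y = (\<Sum>g\<in>G. c g * g)}))"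

text \<open>F-finite: \<open>F_* R\<close> is a finitely generated \<open>R\<close>-module, where \<open>r\<close> acts on \<open>F_* R\<close>
  by multiplication with \<open>r ^ p\<close>.\<close>
definition F_finite :: "nat \<Rightarrow> 'a::comm_ring_1 itself \<Rightarrow> bool" where
  "F_finite p _ \<longleftrightarrow> (\<exists>G::'a set. finite G \<and> (\<forall>x. \<exists>c. x = (\<Sum>g\<in>G. (c g) ^ p * g)))"

text \<open>\<open>\<phi> \<in> C_{e,R} = Hom_R(F^e_* R, R)\<close>: additive and \<open>\<phi>(r^{p^e} x) = r \<phi>(x)\<close>.\<close>
definition Cmap :: "nat \<Rightarrow> nat \<Rightarrow> ('a::comm_ring_1 \<Rightarrow> 'a) \<Rightarrow> bool" where
  "Cmap p e \<phi> \<longleftrightarrow> (\<forall>x y. \<phi> (x + y) = \<phi> x + \<phi> y) \<and> (\<forall>r x. \<phi> (r ^ (p ^ e) * x) = r * \<phi> x)"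

definition compatible :: "('a \<Rightarrow> 'a) \<Rightarrow> 'a set \<Rightarrow> bool" where
  "compatible \<phi> A \<longleftrightarrow> \<phi> ` A \<subseteq> A"

text \<open>Purely F-regular along a prime \<open>P\<close> (conditions (i) and (ii)).\<close>
definition purely_F_regular_along :: "nat \<Rightarrow> 'a::comm_ring_1 set \<Rightarrow> bool" where
  "purely_F_regular_along p P \<longleftrightarrow>
     (\<exists>e>0. \<exists>\<phi>. Cmap p e \<phi> \<and> compatible \<phi> P \<and> \<not> (range \<phi> \<subseteq> P)) \<and>
     (\<forall>B. is_ideal B \<and> B \<noteq> UNIV \<and>
          (\<forall>e>0. \<forall>\<phi>. Cmap p e \<phi> \<and> compatible \<phi> P \<longrightarrow> compatible \<phi> B) \<longrightarrow> B \<subseteq> P)"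

definition ring_hom_fun :: "('a::comm_ring_1 \<Rightarrow> 'b::comm_ring_1) \<Rightarrow> bool" where
  "ring_hom_fun f \<longleftrightarrow> f 1 = 1 \<and> (\<forall>x y. f (x + y) = f x + f y) \<and> (\<forall>x y. f (x * y) = f x * f y)"

end

theory Submission
  imports Defs
begin

lemma hom_zero: "ring_hom_fun \<theta> \<Longrightarrow> \<theta> 0 = 0"
  unfolding ring_hom_fun_def by (metis add_cancel_right_right add_0)

lemma hom_pow: "ring_hom_fun \<theta> \<Longrightarrow> \<theta> (x ^ n) = \<theta> x ^ n"
  by (induction n) (auto simp: ring_hom_fun_def)

lemma cmap_zero: "Cmap p e \<phi> \<Longrightarrow> \<phi> 0 = 0"
  unfolding Cmap_def by (metis add_cancel_right_right add_0)

lemma pow_split: "(r::'a::comm_ring_1) ^ (p ^ (e1 + e2)) = (r ^ (p ^ e1)) ^ (p ^ e2)"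
  by (simp add: power_add power_mult)

lemma cmap_comp:
  fixes f g :: "'a::comm_ring_1 \<Rightarrow> 'a"
  assumes "Cmap p e1 f" "Cmap p e2 g"
  shows "Cmap p (e1 + e2) (\<lambda>x. f (g x))"
  using assms by (simp add: Cmap_def pow_split)

lemma cmap_pre:
  assumes "Cmap p e f"
  shows "Cmap p e (\<lambda>x. f (c * x))"
  using assms unfolding Cmap_def
  by (metis (no_types, lifting) distrib_left mult.left_commute)

lemma compat_pre:
  assumes "compatible f Q" "is_ideal Q"
  shows "compatible (\<lambda>x. f (c * x)) Q"
  using assms unfolding compatible_def is_ideal_def by auto

lemma psi_ok:
  assumes hom: "ring_hom_fun \<theta>" and C: "Cmap p e \<phi>" and cQ: "compatible \<phi> Q"
    and Tadd: "\<forall>x y. T (x + y) = T x + T y" and Tlin: "\<forall>r s. T (\<theta> r * s) = r * T s"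
    and PQ: "P \<subseteq> \<theta> -` Q" and TQ: "T ` Q \<subseteq> P" and Qi: "is_ideal Q"
  shows "Cmap p e (\<lambda>x. T (\<phi> (c * \<theta> x))) \<and> compatible (\<lambda>x. T (\<phi> (c * \<theta> x))) P"
proof
  have add: "\<And>x y. T (\<phi> (c * \<theta> (x + y))) = T (\<phi> (c * \<theta> x)) + T (\<phi> (c * \<theta> y))"
    using hom C Tadd by (simp add: ring_hom_fun_def Cmap_def distrib_left)
  have sc: "\<And>r x. T (\<phi> (c * \<theta> (r ^ (p ^ e) * x))) = r * T (\<phi> (c * \<theta> x))"
  proof -
    fix r x
    have "c * \<theta> (r ^ (p ^ e) * x) = \<theta> r ^ (p ^ e) * (c * \<theta> x)"
      using hom hom_pow[OF hom] by (simp add: ring_hom_fun_def mult_ac)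
    then show "T (\<phi> (c * \<theta> (r ^ (p ^ e) * x))) = r * T (\<phi> (c * \<theta> x))"
      using C Tlin by (simp add: Cmap_def)
  qed
  show "Cmap p e (\<lambda>x. T (\<phi> (c * \<theta> x)))" using add sc by (simp add: Cmap_def)
  show "compatible (\<lambda>x. T (\<phi> (c * \<theta> x))) P"
    unfolding compatible_def
  proof
    fix y assume "y \<in> (\<lambda>x. T (\<phi> (c * \<theta> x))) ` P"
    then obtain x where x: "x \<in> P" "y = T (\<phi> (c * \<theta> x))" by auto
    have "\<theta> x \<in> Q" using x PQ by auto
    then have "c * \<theta> x \<in> Q" using Qi by (simp add: is_ideal_def)
    then have "\<phi> (c * \<theta> x) \<in> Q" using cQ by (auto simp: compatible_def)
    then show "y \<in> P" using x TQ by auto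
  qed
qed

theorem proposition2p14:
  fixes \<theta> :: "'a::comm_ring_1 \<Rightarrow> 'b::comm_ring_1"
    and T :: "'b \<Rightarrow> 'a"
    and P :: "'a set" and Q :: "'b set" and p :: nat
  assumes "prime p" and "CHAR('a) = p" and "CHAR('b) = p"
    and "noetherian_ring TYPE('a)" and "noetherian_ring TYPE('b)"
    and "F_finite p TYPE('a)" and "F_finite p TYPE('b)"
    and "ring_hom_fun \<theta>"
    and "is_prime_ideal P" and "is_prime_ideal Q"
    and "P \<subseteq> \<theta> -` Q"
    and "\<forall>x y. T (x + y) = T x + T y" and "\<forall>r s. T (\<theta> r * s) = r * T s"
    and "T 1 = 1" and "T ` Q \<subseteq> P"
    and "purely_F_regular_along p Q"
  shows "purely_F_regular_along p P"
proof -
  note hom = assms(8) and PQ = assms(11) and Tadd = assms(12) and Tlin = assms(13)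
    and T1 = assms(14) and TQ = assms(15)
  have Qi: "is_ideal Q" and QU: "Q \<noteq> UNIV" using assms(10) by (auto simp: is_prime_ideal_def)
  have Pi: "is_ideal P" and PU: "P \<noteq> UNIV" using assms(9) by (auto simp: is_prime_ideal_def)
  have Qdef: "(\<exists>e>0. \<exists>\<phi>. Cmap p e \<phi> \<and> compatible \<phi> Q \<and> \<not> (range \<phi> \<subseteq> Q)) \<and>
     (\<forall>B. is_ideal B \<and> B \<noteq> UNIV \<and>
          (\<forall>e>0. \<forall>\<phi>. Cmap p e \<phi> \<and> compatible \<phi> Q \<longrightarrow> compatible \<phi> B) \<longrightarrow> B \<subseteq> Q)"
    using assms(16) unfolding purely_F_regular_along_def .
  obtain e0 \<phi>0 where e0: "e0 > 0" "Cmap p e0 \<phi>0" "compatible \<phi>0 Q" "\<not> range \<phi>0 \<subseteq> Q"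
    using conjunct1[OF Qdef] by blast
  have iiQ: "\<And>B. is_ideal B \<Longrightarrow> B \<noteq> UNIV \<Longrightarrow>
      (\<forall>e>0. \<forall>\<phi>. Cmap p e \<phi> \<and> compatible \<phi> Q \<longrightarrow> compatible \<phi> B) \<Longrightarrow> B \<subseteq> Q"
    using conjunct2[OF Qdef] by blast
  have psi: "\<And>e \<phi> c. Cmap p e \<phi> \<Longrightarrow> compatible \<phi> Q \<Longrightarrow>
      Cmap p e (\<lambda>x. T (\<phi> (c * \<theta> x))) \<and> compatible (\<lambda>x. T (\<phi> (c * \<theta> x))) P"
    by (rule psi_ok[OF hom _ _ Tadd Tlin PQ TQ Qi])
  have T0: "T 0 = 0" proof - have "T (0+0) = T 0 + T 0" using Tadd by blast then show ?thesis by simp qed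
  have hom1: "\<theta> 1 = 1" using hom by (simp add: ring_hom_fun_def)
  have "\<exists>e>0. \<exists>\<psi>. Cmap p e \<psi> \<and> compatible \<psi> P \<and> \<not> range \<psi> \<subseteq> P"
  proof (rule ccontr)
    assume neg: "\<not> ?thesis"
    have allP: "T (\<phi> c) \<in> P" if "e > 0" "Cmap p e \<phi>" "compatible \<phi> Q" for e \<phi> c
    proof -
      have "range (\<lambda>x. T (\<phi> (c * \<theta> x))) \<subseteq> P" using neg psi[OF that(2,3), of c] that(1) by blast
      then have "T (\<phi> (c * \<theta> 1)) \<in> P" by blast
      then show ?thesis using hom1 by simp
    qed
    define J where "J = {s. \<forall>t. T (s * t) \<in> P}"
    have Ji: "is_ideal J"
    proof -
      have "r * x \<in> J" if "x \<in> J" for r x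
      proof -
        have "T (r * x * t) \<in> P" for t
        proof -
          have "T (x * (r * t)) \<in> P" using that unfolding J_def by blast
          moreover have eq: "r * x * t = x * (r * t)" by (simp add: mult_ac)
          ultimately show ?thesis unfolding eq by blast
        qed
        then show ?thesis unfolding J_def by blast
      qed
      moreover have "0 \<in> J" using Pi T0 unfolding J_def is_ideal_def by auto
      moreover have "x + y \<in> J" if "x \<in> J" "y \<in> J" for x y
        using that Pi Tadd unfolding J_def is_ideal_def by (auto simp: distrib_right)
      ultimately show ?thesis unfolding is_ideal_def by blast
    qed
    have JU: "J \<noteq> UNIV"
    proof
      assume "J = UNIV"
      then have "T (1 * 1) \<in> P" unfolding J_def by blast
      then have "1 \<in> P" using T1 by simp
      then have "\<And>r. r * 1 \<in> P" using Pi unfolding is_ideal_def by blast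
      then show False using PU by auto
    qed
    have Jc: "compatible \<phi> J" if "e > 0" "Cmap p e \<phi>" "compatible \<phi> Q" for e \<phi>
      unfolding compatible_def
    proof
      fix y assume "y \<in> \<phi> ` J"
      then obtain s where y: "y = \<phi> s" by auto
      have "T (\<phi> s * t) \<in> P" for t
      proof -
        have "\<phi> (t ^ (p ^ e) * s) = t * \<phi> s" using that(2) by (simp add: Cmap_def)
        then show ?thesis using allP[OF that, of "t ^ (p ^ e) * s"] by (simp add: mult.commute)
      qed
      then show "y \<in> J" using y J_def by auto
    qed
    have "J \<subseteq> Q" using iiQ[OF Ji JU] Jc by blast
    moreover obtain c where c: "\<phi>0 c \<notin> Q" using e0(4) by auto
    moreover have "\<phi>0 c \<in> J"
    proof -
      have "T (\<phi>0 c * t) \<in> P" for t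
      proof -
        have "\<phi>0 (t ^ (p ^ e0) * c) = t * \<phi>0 c" using e0(2) by (simp add: Cmap_def)
        then show ?thesis using allP[OF e0(1-3), of "t ^ (p ^ e0) * c"] by (simp add: mult.commute)
      qed
      then show ?thesis by (simp add: J_def)
    qed
    ultimately show False by blast
  qed
  moreover have "\<forall>B. is_ideal B \<and> B \<noteq> UNIV \<and>
          (\<forall>e>0. \<forall>\<phi>. Cmap p e \<phi> \<and> compatible \<phi> P \<longrightarrow> compatible \<phi> B) \<longrightarrow> B \<subseteq> P"
  proof (intro allI impI)
    fix B :: "'a set"
    assume H: "is_ideal B \<and> B \<noteq> UNIV \<and>
          (\<forall>e>0. \<forall>\<phi>. Cmap p e \<phi> \<and> compatible \<phi> P \<longrightarrow> compatible \<phi> B)"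
    then have Bi: "is_ideal B" and BU: "B \<noteq> UNIV" and Bc:
      "\<And>e \<phi>. e > 0 \<Longrightarrow> Cmap p e \<phi> \<Longrightarrow> compatible \<phi> P \<Longrightarrow> compatible \<phi> B" by auto
    show "B \<subseteq> P"
    proof
      fix b assume bB: "b \<in> B"
      show "b \<in> P"
      proof (rule ccontr)
        assume bP: "b \<notin> P"
        define B' where "B' = {s. (\<forall>t. T (s * t) \<in> B) \<and>
           (\<forall>e>0. \<forall>\<phi>. Cmap p e \<phi> \<and> compatible \<phi> Q \<longrightarrow> T (\<phi> s) \<in> B)}"
        have Badd: "x + y \<in> B" if "x \<in> B" "y \<in> B" for x y
          using Bi that by (simp add: is_ideal_def)
        have B0: "0 \<in> B" using Bi by (simp add: is_ideal_def)
        have Bmul: "r * x \<in> B" if "x \<in> B" for r x using Bi that by (simp add: is_ideal_def)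
        have B'i: "is_ideal B'"
          unfolding is_ideal_def
        proof (intro conjI ballI allI impI)
          have "T (\<phi> 0) \<in> B" if "Cmap p e \<phi>" for e \<phi>
            using cmap_zero[OF that] T0 B0 by simp
          then show "0 \<in> B'" unfolding B'_def using T0 B0 by auto
        next
          fix x y assume "x \<in> B'" "y \<in> B'"
          then show "x + y \<in> B'" unfolding B'_def
            using Tadd Badd by (auto simp: distrib_right Cmap_def)
        next
          fix r x assume xB: "x \<in> B'"
          have 1: "T (r * x * t) \<in> B" for t
          proof -
            have "T (x * (r * t)) \<in> B" using xB unfolding B'_def by blast
            moreover have eq: "r * x * t = x * (r * t)" by (simp add: mult_ac)
            ultimately show ?thesis unfolding eq by blast
          qed
          have 2: "T (\<phi> (r * x)) \<in> B" if "e > 0" "Cmap p e \<phi>" "compatible \<phi> Q" for e \<phi>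
            using xB cmap_pre[OF that(2), of r] compat_pre[OF that(3) Qi, of r] that(1)
            unfolding B'_def by blast
          show "r * x \<in> B'" unfolding B'_def using 1 2 by blast
        qed
        have B'U: "B' \<noteq> UNIV"
        proof
          assume "B' = UNIV"
          then have "T (1 * 1) \<in> B" unfolding B'_def by blast
          then have "1 \<in> B" using T1 by simp
          then have "\<And>r. r * 1 \<in> B" using Bmul by blast
          then show False using BU by auto
        qed
        have B'c: "compatible \<phi> B'" if "e > 0" "Cmap p e \<phi>" "compatible \<phi> Q" for e \<phi>
          unfolding compatible_def
        proof
          fix y assume "y \<in> \<phi> ` B'"
          then obtain s where y: "y = \<phi> s" and sB: "s \<in> B'" by auto
          have 1: "T (\<phi> s * t) \<in> B" for t
          proof -
            have "\<phi> (t ^ (p ^ e) * s) = t * \<phi> s" using that(2) by (simp add: Cmap_def)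
            moreover have "T (\<phi> (t ^ (p ^ e) * s)) \<in> B"
              using sB cmap_pre[OF that(2), of "t ^ (p ^ e)"] compat_pre[OF that(3) Qi]
                that(1) unfolding B'_def by blast
            ultimately show ?thesis by (simp add: mult.commute)
          qed
          have 2: "T (g (\<phi> s)) \<in> B" if "e2 > 0" "Cmap p e2 g" "compatible g Q" for e2 g
          proof -
            have c1: "Cmap p (e2 + e) (\<lambda>x. g (\<phi> x))" using cmap_comp[OF that(2) \<open>Cmap p e \<phi>\<close>] .
            have c2: "compatible (\<lambda>x. g (\<phi> x)) Q"
              using that(3) \<open>compatible \<phi> Q\<close> unfolding compatible_def by auto
            have c3: "e2 + e > 0" using that(1) by simp
            have H: "\<forall>e>0. \<forall>\<phi>. Cmap p e \<phi> \<and> compatible \<phi> Q \<longrightarrow> T (\<phi> s) \<in> B"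
              using sB unfolding B'_def by blast
            show ?thesis using H[rule_format, OF c3, of "\<lambda>x. g (\<phi> x)"] c1 c2 by simp
          qed
          show "y \<in> B'" unfolding B'_def using y 1 2 by blast
        qed
        have "B' \<subseteq> Q" using iiQ[OF B'i B'U] B'c by blast
        moreover have "\<theta> b \<in> B'"
        proof -
          have 1: "T (\<theta> b * t) \<in> B" for t using Tlin Bmul[OF bB, of "T t"]
            by (simp add: mult.commute)
          have 2: "T (\<phi> (\<theta> b)) \<in> B" if "e > 0" "Cmap p e \<phi>" "compatible \<phi> Q" for e \<phi>
          proof -
            from psi[OF that(2,3), of 1] have "Cmap p e (\<lambda>x. T (\<phi> (1 * \<theta> x)))"
              "compatible (\<lambda>x. T (\<phi> (1 * \<theta> x))) P" by auto
            then have "compatible (\<lambda>x. T (\<phi> (1 * \<theta> x))) B" using Bc that(1) by blast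
            then show ?thesis using bB unfolding compatible_def by auto
          qed
          show ?thesis unfolding B'_def using 1 2 by blast
        qed
        moreover have "\<theta> b \<notin> Q"
        proof
          assume "\<theta> b \<in> Q"
          then have "T (\<theta> b * 1) \<in> P" using TQ by auto
          moreover have "T (\<theta> b * 1) = b" using Tlin[rule_format, of b 1] T1 by simp
          ultimately show False using bP by simp
        qed
        ultimately show False by blast
      qed
    qed
  qed
  ultimately show ?thesis unfolding purely_F_regular_along_def by blast
qed

end
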